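(* Let $q$ be a prime power, let $1 \le k \le n-1$, and let $S \subseteq \mathcal{L}_{n,k}$ be nonempty. Then \[ \Phi_{J_q(n,k)}(S) \le \frac{[n-k+1]_q}{q[n-k]_q}\left(1 - \frac{\mu_k(S)}{\mu_{k-1}(\partial S)}\right). \]
   Context: $\mathbb{F}_q$ is the finite field with $q$ elements; $\mathcal{L}_{n,k}$ is the set of $k$-dimensional linear subspaces of $(\mathbb{F}_q)^n$, and for $T \subseteq \mathcal{L}_{n,j}$, $\mu_j(T) = |T|/|\mathcal{L}_{n,j}|$. The shadow of $S \subseteq \mathcal{L}_{n,k}$ is $\partial S = \{B \in \mathcal{L}_{n,k-1} : \exists A \in S,\ B \subset A\}$. For real $x$, $[x]_q = \frac{q^x-1}{q-1}$. The Grassmann graph $J_q(n,k)$ has vertex set $\mathcal{L}_{n,k}$, with $A_1, A_2$ adjacent iff $\dim(A_1\cap A_2) = k-1$; it is $d$-regular with $d = q[k]_q[n-k]_q$. For a $d$-regular graph $G=(V,E)$ and nonempty $S \subseteq V$, $\Phi_G(S) = \frac{|E(S,\bar S)|}{d|S|}$, where $E(S,\bar S)$ is the set of edges between $S$ and $\bar S = V\setminus S$. *)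

theory Defs
  imports "HOL-Analysis.Analysis"
begin

text \<open>Ambient space: ('a::{finite,field})^'n, i.e. (F_q)^n with q = CARD('a), n = CARD('n).\<close>

definition subspaces :: "nat \<Rightarrow> (('a::{finite,field})^'n) set set" where
  "subspaces k = {V. vec.subspace V \<and> vec.dim V = k}"

definition mu :: "nat \<Rightarrow> (('a::{finite,field})^'n) set set \<Rightarrow> real" where
  "mu j T = real (card T) / real (card (subspaces j :: ('a^'n) set set))"

definition shadow :: "nat \<Rightarrow> (('a::{finite,field})^'n) set set \<Rightarrow> ('a^'n) set set" where
  "shadow k S = {B \<in> subspaces (k - 1). \<exists>A\<in>S. B \<subset> A}"

definition qint :: "real \<Rightarrow> real \<Rightarrow> real" where
  "qint q x = (q powr x - 1) / (q - 1)"

definition grassmann_adj :: "nat \<Rightarrow> (('a::{finite,field})^'n) set \<Rightarrow> ('a^'n) set \<Rightarrow> bool" where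
  "grassmann_adj k A1 A2 \<longleftrightarrow> A1 \<in> subspaces k \<and> A2 \<in> subspaces k \<and> vec.dim (A1 \<inter> A2) = k - 1"

definition edge_expansion :: "'v set \<Rightarrow> ('v \<Rightarrow> 'v \<Rightarrow> bool) \<Rightarrow> real \<Rightarrow> 'v set \<Rightarrow> real" where
  "edge_expansion V adj d S =
     real (card {(x, y). x \<in> S \<and> y \<in> V - S \<and> adj x y}) / (d * real (card S))"

text \<open>Phi_{J_q(n,k)}(S), with the degree d = q [k]_q [n-k]_q of J_q(n,k).\<close>
definition Phi_grassmann :: "nat \<Rightarrow> (('a::{finite,field})^'n) set set \<Rightarrow> real" where
  "Phi_grassmann k S =
     (let q = real CARD('a); n = CARD('n)
      in edge_expansion (subspaces k) (grassmann_adj k)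
           (q * qint q (real k) * qint q (real n - real k)) S)"

end

theory Submission
  imports Defs
begin


lemma flag_count:
  assumes "finite L0" "finite L1"
  shows "(\<Sum>B\<in>L1. card {A\<in>L0. R B A}) = (\<Sum>A\<in>L0. card {B\<in>L1. R B A})"
proof -
  have "(\<Sum>B\<in>L1. card {A\<in>L0. R B A}) = (\<Sum>B\<in>L1. \<Sum>A\<in>L0. if R B A then 1 else (0::nat))"
    using assms by (simp add: sum.If_cases Int_def)
  also have "\<dots> = (\<Sum>A\<in>L0. \<Sum>B\<in>L1. if R B A then 1 else (0::nat))"
    by (rule sum.swap)
  also have "\<dots> = (\<Sum>A\<in>L0. card {B\<in>L1. R B A})"
    using assms by (simp add: sum.If_cases Int_def)
  finally show ?thesis .
qed

lemma abstract_bound: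
  fixes L0 L1 :: "'v set" and R :: "'v \<Rightarrow> 'v \<Rightarrow> bool"
  assumes fin: "finite L0" "finite L1" and SL: "S \<subseteq> L0" and Sne: "S \<noteq> {}"
    and up: "\<And>B. B \<in> L1 \<Longrightarrow> real (card {A\<in>L0. R B A}) = N"
    and down: "\<And>A. A \<in> L0 \<Longrightarrow> real (card {B\<in>L1. R B A}) = h"
    and hpos: "h > 0"
    and adj: "\<And>A A'. A \<in> L0 \<Longrightarrow> A' \<in> L0 \<Longrightarrow> adj A A' \<longleftrightarrow> (A \<noteq> A' \<and> (\<exists>B\<in>L1. R B A \<and> R B A'))"
    and uniq: "\<And>A A' B B'. A \<in> L0 \<Longrightarrow> A' \<in> L0 \<Longrightarrow> A \<noteq> A' \<Longrightarrow> B \<in> L1 \<Longrightarrow> B' \<in> L1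
       \<Longrightarrow> R B A \<Longrightarrow> R B A' \<Longrightarrow> R B' A \<Longrightarrow> R B' A' \<Longrightarrow> B = B'"
  shows "real (card {(x,y). x\<in>S \<and> y\<in>L0-S \<and> adj x y})
     \<le> real (card S) * N * h - (real (card S) * h)^2 / card {B\<in>L1. \<exists>A\<in>S. R B A}"
proof -
  define d where "d B = card {A\<in>S. R B A}" for B
  have finS: "finite S" using fin SL finite_subset by blast
  define Sh where "Sh = {B\<in>L1. \<exists>A\<in>S. R B A}"
  have E: "{(x,y). x\<in>S \<and> y\<in>L0-S \<and> adj x y} = Sigma S (\<lambda>x. {y\<in>L0-S. adj x y})" by auto
  have F: "{y\<in>L0-S. adj x y} = (\<Union>B\<in>{B\<in>L1. R B x}. {A\<in>L0. R B A} - S)" if "x \<in> S" for x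
  proof
    show "{y\<in>L0-S. adj x y} \<subseteq> (\<Union>B\<in>{B\<in>L1. R B x}. {A\<in>L0. R B A} - S)"
    proof
      fix y assume y: "y \<in> {y\<in>L0-S. adj x y}"
      then have "\<exists>B\<in>L1. R B x \<and> R B y" using adj[of x y] that SL by auto
      then show "y \<in> (\<Union>B\<in>{B\<in>L1. R B x}. {A\<in>L0. R B A} - S)" using y by auto
    qed
    show "(\<Union>B\<in>{B\<in>L1. R B x}. {A\<in>L0. R B A} - S) \<subseteq> {y\<in>L0-S. adj x y}"
      using that SL adj by fastforce
  qed
  have cardF: "card {y\<in>L0-S. adj x y} = (\<Sum>B\<in>{B\<in>L1. R B x}. card ({A\<in>L0. R B A} - S))"
    if x: "x \<in> S" for x
    unfolding F[OF x]
  proof (rule card_UN_disjoint)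
    show "finite {B \<in> L1. R B x}" using fin by auto
    show "\<forall>i\<in>{B \<in> L1. R B x}. finite ({A \<in> L0. R i A} - S)" using fin by auto
    show "\<forall>i\<in>{B \<in> L1. R B x}. \<forall>j\<in>{B \<in> L1. R B x}. i \<noteq> j \<longrightarrow>
        ({A \<in> L0. R i A} - S) \<inter> ({A \<in> L0. R j A} - S) = {}"
      using uniq x SL by blast
  qed
  have cd: "real (card ({A\<in>L0. R B A} - S)) = N - real (d B)" if "B \<in> L1" for B
  proof -
    have "{A\<in>L0. R B A} - S = {A\<in>L0. R B A} - {A\<in>S. R B A}" by auto
    moreover have "card ({A\<in>L0. R B A} - {A\<in>S. R B A}) = card {A\<in>L0. R B A} - card {A\<in>S. R B A}"
      using finS SL by (intro card_Diff_subset) auto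
    moreover have "card {A\<in>S. R B A} \<le> card {A\<in>L0. R B A}"
      using fin SL by (intro card_mono) auto
    ultimately show ?thesis using up[OF that] by (simp add: d_def of_nat_diff)
  qed
  have swap: "(\<Sum>x\<in>S. \<Sum>B\<in>{B\<in>L1. R B x}. f B) = (\<Sum>B\<in>Sh. real (d B) * f B)" for f :: "'v \<Rightarrow> real"
  proof -
    have "(\<Sum>x\<in>S. \<Sum>B\<in>{B\<in>L1. R B x}. f B) = (\<Sum>x\<in>S. \<Sum>B\<in>L1. if R B x then f B else 0)"
      using fin by (simp add: sum.inter_filter)
    also have "\<dots> = (\<Sum>B\<in>L1. \<Sum>x\<in>S. if R B x then f B else 0)" by (rule sum.swap)
    also have "\<dots> = (\<Sum>B\<in>L1. real (d B) * f B)"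
      using finS by (simp add: sum.If_cases d_def Int_def)
    also have "\<dots> = (\<Sum>B\<in>Sh. real (d B) * f B)"
    proof (rule sum.mono_neutral_right)
      show "finite L1" using fin by simp
      show "Sh \<subseteq> L1" by (auto simp: Sh_def)
      show "\<forall>i\<in>L1 - Sh. real (d i) * f i = 0"
        by (auto simp: Sh_def d_def dest!: card_gt_0_iff[THEN iffD1])
    qed
    finally show ?thesis .
  qed
  have "real (card {(x,y). x\<in>S \<and> y\<in>L0-S \<and> adj x y}) = (\<Sum>x\<in>S. real (card {y\<in>L0-S. adj x y}))"
    unfolding E using finS fin by (subst card_SigmaI) auto
  also have "\<dots> = (\<Sum>x\<in>S. \<Sum>B\<in>{B\<in>L1. R B x}. N - real (d B))"
    using cardF cd by (auto intro!: sum.cong)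
  also have "\<dots> = (\<Sum>B\<in>Sh. real (d B) * (N - real (d B)))" by (rule swap)
  also have "\<dots> = N * (\<Sum>B\<in>Sh. real (d B)) - (\<Sum>B\<in>Sh. (real (d B))^2)"
    by (simp add: algebra_simps sum_distrib_left sum_subtractf power2_eq_square)
  finally have eq: "real (card {(x,y). x\<in>S \<and> y\<in>L0-S \<and> adj x y}) =
     N * (\<Sum>B\<in>Sh. real (d B)) - (\<Sum>B\<in>Sh. (real (d B))^2)" .
  have s1: "(\<Sum>B\<in>Sh. real (d B)) = real (card S) * h"
  proof -
    have "(\<Sum>B\<in>Sh. real (d B)) = (\<Sum>B\<in>Sh. real (d B) * 1)" by simp
    also have "\<dots> = (\<Sum>x\<in>S. \<Sum>B\<in>{B\<in>L1. R B x}. (1::real))" by (rule swap[symmetric])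
    also have "\<dots> = (\<Sum>x\<in>S. h)" using down SL by (intro sum.cong) auto
    finally show ?thesis by simp
  qed
  have Shne: "card Sh > 0"
  proof -
    have "finite Sh" using fin by (simp add: Sh_def)
    moreover have "Sh \<noteq> {}"
    proof
      assume "Sh = {}"
      then have "(\<Sum>B\<in>Sh. real (d B)) = 0" by simp
      then show False using s1 finS Sne hpos by simp
    qed
    ultimately show ?thesis by (simp add: card_gt_0_iff)
  qed
  have cs: "(\<Sum>B\<in>Sh. real (d B))^2 \<le> (\<Sum>B\<in>Sh. (real (d B))^2) * card Sh"
    by (rule sum_squared_le_sum_of_squares)
  have "(real (card S) * h)^2 / card Sh \<le> (\<Sum>B\<in>Sh. (real (d B))^2)"
    using cs Shne s1 by (simp add: divide_le_eq)
  then show ?thesis unfolding eq s1 Sh_def[symmetric] by (simp add: algebra_simps)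
qed



lemma card_span_insert:
  fixes x :: "'a::{finite,field}^'n" and F :: "('a^'n) set"
  assumes "x \<notin> vec.span F"
  shows "card (vec.span (insert x F)) = CARD('a) * card (vec.span F)"
proof -
  define f where "f = (\<lambda>(c::'a, y::'a^'n). c *s x + y)"
  have inj: "inj_on f (UNIV \<times> vec.span F)"
  proof (rule inj_onI, clarsimp simp: f_def)
    fix c y c' y'
    assume y: "y \<in> vec.span F" and y': "y' \<in> vec.span F" and e: "c *s x + y = c' *s x + y'"
    show "c = c' \<and> y = y'"
    proof (cases "c = c'")
      case True then show ?thesis using e by simp
    next
      case False
      have "(c - c') *s x = y' - y" using e by (simp add: algebra_simps vec.scale_left_diff_distrib)
      then have "x = inverse (c - c') *s (y' - y)" using False
        by (metis (no_types, lifting) eq_iff_diff_eq_0 left_inverse vector_smult_lid vector_smult_assoc)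
      then have "x \<in> vec.span F" using y y' by (simp add: vec.span_diff vec.span_scale)
      then show ?thesis using assms by simp
    qed
  qed
  have img: "f ` (UNIV \<times> vec.span F) = vec.span (insert x F)"
  proof
    show "f ` (UNIV \<times> vec.span F) \<subseteq> vec.span (insert x F)"
    proof (clarsimp simp: f_def vec.span_insert)
      fix a b assume "b \<in> vec.span F"
      then show "\<exists>k. a *s x + b - k *s x \<in> vec.span F" by (intro exI[of _ a]) simp
    qed
    show "vec.span (insert x F) \<subseteq> f ` (UNIV \<times> vec.span F)"
    proof
      fix z assume "z \<in> vec.span (insert x F)"
      then obtain k where k: "z - k *s x \<in> vec.span F" by (auto simp: vec.span_insert)
      have "z = f (k, z - k *s x)" by (simp add: f_def)
      then show "z \<in> f ` (UNIV \<times> vec.span F)" using k by blast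
    qed
  qed
  have "card (vec.span (insert x F)) = card ((UNIV::'a set) \<times> vec.span F)"
  proof -
    have "card (f ` (UNIV \<times> vec.span F)) = card ((UNIV::'a set) \<times> vec.span F)"
      using inj by (rule card_image)
    then show ?thesis unfolding img .
  qed
  also have "card ((UNIV::'a set) \<times> vec.span F) = CARD('a) * card (vec.span F)"
    by (simp add: card_cartesian_product)
  finally show ?thesis .
qed

lemma card_span_indep:
  fixes B :: "('a::{finite,field}^'n) set"
  assumes "vec.independent B"
  shows "card (vec.span B) = CARD('a) ^ card B"
proof -
  have "finite B" by simp
  then show ?thesis using assms
  proof (induction B rule: finite_induct)
    case empty then show ?case by simp
  next
    case (insert x F)
    then have "vec.independent F" "x \<notin> vec.span F"
      using vec.independent_insert[of x F] by simp_all
    then show ?case using insert card_span_insert[of x F] by simp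
  qed
qed

lemma card_subspace:
  fixes V :: "('a::{finite,field}^'n) set"
  assumes "vec.subspace V"
  shows "card V = CARD('a) ^ vec.dim V"
proof -
  obtain B where B: "B \<subseteq> V" "vec.independent B" "V \<subseteq> vec.span B" "card B = vec.dim V"
    using vec.basis_exists by blast
  have "vec.span B = V" using B assms by (metis vec.span_minimal subset_antisym)
  then show ?thesis using card_span_indep[OF B(2)] B(4) by simp
qed

lemma span_insert_eq:
  fixes A B :: "('a::{finite,field}^'n) set"
  assumes "vec.subspace A" "vec.subspace B" "B \<subseteq> A" "v \<in> A" "v \<notin> B"
    "vec.dim A = Suc (vec.dim B)"
  shows "A = vec.span (insert v B)"
proof -
  have sub: "vec.span (insert v B) \<subseteq> A" using assms by (simp add: vec.span_minimal)
  have "v \<notin> vec.span B" using assms by (metis vec.span_eq_iff)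
  then have "vec.dim (vec.span (insert v B)) = Suc (vec.dim B)"
    by (simp add: vec.dim_insert)
  then show ?thesis using vec.subspace_dim_equal[OF vec.subspace_span assms(1) sub] assms by simp
qed

lemma up_count:
  fixes B :: "('a::{finite,field}^'n) set"
  assumes "vec.subspace B" "vec.dim B = j"
  shows "card {A. vec.subspace A \<and> vec.dim A = Suc j \<and> B \<subseteq> A} * (CARD('a)^Suc j - CARD('a)^j)
     = CARD('a)^CARD('n) - CARD('a)^j"
proof -
  let ?U = "{A. vec.subspace A \<and> vec.dim A = Suc j \<and> B \<subseteq> A}"
  have cover: "UNIV - B = (\<Union>A\<in>?U. A - B)"
  proof
    show "UNIV - B \<subseteq> (\<Union>A\<in>?U. A - B)"
    proof
      fix v assume v: "v \<in> UNIV - B"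
      have "vec.span B = B" using assms by (simp add: vec.span_eq_iff)
      moreover have "v \<notin> vec.span B" using v assms by (metis vec.span_eq_iff Diff_iff)
      ultimately have "vec.dim (vec.span (insert v B)) = Suc j" using assms
        by (simp add: vec.dim_insert)
      then have "vec.span (insert v B) \<in> ?U" by (auto intro: vec.span_superset[THEN subsetD])
      moreover have "v \<in> vec.span (insert v B) - B" using v by (simp add: vec.span_base)
      ultimately show "v \<in> (\<Union>A\<in>?U. A - B)" by blast
    qed
  qed auto
  have "card (UNIV - B) = (\<Sum>A\<in>?U. card (A - B))"
    unfolding cover
  proof (rule card_UN_disjoint)
    show "finite ?U" by simp
    show "\<forall>A\<in>?U. finite (A - B)" by simp
    show "\<forall>A\<in>?U. \<forall>A'\<in>?U. A \<noteq> A' \<longrightarrow> (A - B) \<inter> (A' - B) = {}"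
    proof (intro ballI impI)
      fix A A' assume A: "A \<in> ?U" and A': "A' \<in> ?U" and ne: "A \<noteq> A'"
      show "(A - B) \<inter> (A' - B) = {}"
      proof (rule ccontr)
        assume "(A - B) \<inter> (A' - B) \<noteq> {}"
        then obtain v where v: "v \<in> A" "v \<in> A'" "v \<notin> B" by blast
        have "A = vec.span (insert v B)"
          by (rule span_insert_eq) (use A v assms in auto)
        moreover have "A' = vec.span (insert v B)"
          by (rule span_insert_eq) (use A' v assms in auto)
        ultimately show False using ne by simp
      qed
    qed
  qed
  also have "\<dots> = (\<Sum>A\<in>?U. CARD('a)^Suc j - CARD('a)^j)"
  proof (rule sum.cong)
    fix A assume A: "A \<in> ?U"
    then show "card (A - B) = CARD('a)^Suc j - CARD('a)^j"
      using assms card_subspace[of A] card_subspace[of B] by (simp add: card_Diff_subset)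
  qed simp
  finally have "card (UNIV - B) = card ?U * (CARD('a)^Suc j - CARD('a)^j)" by simp
  moreover have "card (UNIV - B) = CARD('a)^CARD('n) - CARD('a)^j"
    using assms card_subspace[of B] by (simp add: card_Diff_subset)
  ultimately show ?thesis by simp
qed



fun indl :: "('a::{finite,field}^'n) list \<Rightarrow> bool" where
  "indl [] = True"
| "indl (v # xs) = (v \<notin> vec.span (set xs) \<and> indl xs)"

lemma indl_props: "indl xs \<Longrightarrow> distinct xs \<and> vec.independent (set xs)"
proof (induction xs)
  case Nil then show ?case by (simp add: vec.independent_empty)
next
  case (Cons v xs)
  then have "v \<notin> vec.span (set xs)" "distinct xs" "vec.independent (set xs)" by auto
  moreover then have "v \<notin> set xs" using vec.span_base by blast
  ultimately show ?case by (simp add: vec.independent_insertI)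
qed

definition IL :: "('a::{finite,field}^'n) set \<Rightarrow> nat \<Rightarrow> ('a^'n) list set" where
  "IL W j = {xs. length xs = j \<and> indl xs \<and> set xs \<subseteq> W}"

lemma finite_IL: "finite (IL W j)"
proof -
  have "IL W j \<subseteq> {xs. set xs \<subseteq> UNIV \<and> length xs = j}" by (auto simp: IL_def)
  moreover have "finite {xs::('a^'n) list. set xs \<subseteq> UNIV \<and> length xs = j}"
    by (rule finite_lists_length_eq) simp
  ultimately show ?thesis by (rule finite_subset)
qed

lemma card_span_IL:
  assumes "xs \<in> IL W j"
  shows "card (vec.span (set xs)) = CARD('a::{finite,field}) ^ j"
    and "vec.dim (vec.span (set (xs::('a^'n) list))) = j"
proof -
  have d: "distinct xs" "vec.independent (set xs)" "length xs = j"
    using assms indl_props by (auto simp: IL_def)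
  have c: "card (set xs) = j" using d by (simp add: distinct_card)
  show "card (vec.span (set xs)) = CARD('a) ^ j"
    using card_span_indep[OF d(2)] c by simp
  show "vec.dim (vec.span (set (xs::('a^'n) list))) = j"
    using vec.dim_span_eq_card_independent[OF d(2)] c by simp
qed

lemma card_IL:
  fixes W :: "('a::{finite,field}^'n) set"
  assumes W: "vec.subspace W"
  shows "card (IL W j) = (\<Prod>i<j. CARD('a) ^ vec.dim W - CARD('a) ^ i)"
proof (induction j)
  case 0
  have "IL W 0 = {[]}" by (auto simp: IL_def)
  then show ?case by simp
next
  case (Suc j)
  let ?q = "CARD('a)"
  have eq: "IL W (Suc j) = (\<lambda>(xs, v). v # xs) ` (SIGMA xs:IL W j. W - vec.span (set xs))"
  proof
    show "IL W (Suc j) \<subseteq> (\<lambda>(xs, v). v # xs) ` (SIGMA xs:IL W j. W - vec.span (set xs))"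
    proof
      fix ys assume ys: "ys \<in> IL W (Suc j)"
      then obtain v xs where "ys = v # xs" by (cases ys) (auto simp: IL_def)
      then show "ys \<in> (\<lambda>(xs, v). v # xs) ` (SIGMA xs:IL W j. W - vec.span (set xs))"
        using ys by (auto simp: IL_def intro!: image_eqI[of _ _ "(xs, v)"])
    qed
    show "(\<lambda>(xs, v). v # xs) ` (SIGMA xs:IL W j. W - vec.span (set xs)) \<subseteq> IL W (Suc j)"
      by (auto simp: IL_def)
  qed
  have inj: "inj_on (\<lambda>(xs, v). v # xs) (SIGMA xs:IL W j. W - vec.span (set xs))"
    by (auto simp: inj_on_def)
  have "card (IL W (Suc j)) = card (SIGMA xs:IL W j. W - vec.span (set xs))"
    unfolding eq by (rule card_image[OF inj])
  also have "\<dots> = (\<Sum>xs\<in>IL W j. card (W - vec.span (set xs)))"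
    using finite_IL by (subst card_SigmaI) auto
  also have "\<dots> = (\<Sum>xs\<in>IL W j. ?q ^ vec.dim W - ?q ^ j)"
  proof (rule sum.cong)
    fix xs assume xs: "xs \<in> IL W j"
    have "set xs \<subseteq> W" using xs by (simp add: IL_def)
    then have "vec.span (set xs) \<subseteq> W" using W by (rule vec.span_minimal)
    then have "card (W - vec.span (set xs)) = card W - card (vec.span (set xs))"
      by (simp add: card_Diff_subset)
    then show "card (W - vec.span (set xs)) = ?q ^ vec.dim W - ?q ^ j"
      using card_subspace[OF W] card_span_IL(1)[OF xs] by simp
  qed simp
  also have "\<dots> = card (IL W j) * (?q ^ vec.dim W - ?q ^ j)" by simp
  finally show ?case using Suc by simp
qed

lemma IL_span_eq:
  fixes B :: "('a::{finite,field}^'n) set"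
  assumes "vec.subspace B" "vec.dim B = j" "xs \<in> IL B j"
  shows "vec.span (set xs) = B"
proof -
  have "set xs \<subseteq> B" using assms by (simp add: IL_def)
  then have sub: "vec.span (set xs) \<subseteq> B" using assms(1) by (rule vec.span_minimal)
  show ?thesis
    using vec.subspace_dim_equal[OF vec.subspace_span assms(1) sub] card_span_IL(2)[OF assms(3)] assms
    by simp
qed

lemma G_count:
  fixes W :: "('a::{finite,field}^'n) set"
  assumes W: "vec.subspace W"
  shows "card {B. vec.subspace B \<and> vec.dim B = j \<and> B \<subseteq> W} * (\<Prod>i<j. CARD('a) ^ j - CARD('a) ^ i)
       = (\<Prod>i<j. CARD('a) ^ vec.dim W - CARD('a) ^ i)"
proof -
  let ?G = "{B. vec.subspace B \<and> vec.dim B = j \<and> B \<subseteq> W}"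
  have cover: "IL W j = (\<Union>B\<in>?G. IL B j)"
  proof
    show "IL W j \<subseteq> (\<Union>B\<in>?G. IL B j)"
    proof
      fix xs assume xs: "xs \<in> IL W j"
      have "vec.span (set xs) \<in> ?G"
        using xs W card_span_IL(2)[OF xs] by (auto simp: IL_def intro: vec.span_minimal[THEN subsetD])
      moreover have "xs \<in> IL (vec.span (set xs)) j"
        using xs by (auto simp: IL_def intro: vec.span_base)
      ultimately show "xs \<in> (\<Union>B\<in>?G. IL B j)" by blast
    qed
    show "(\<Union>B\<in>?G. IL B j) \<subseteq> IL W j" by (auto simp: IL_def)
  qed
  have "card (IL W j) = (\<Sum>B\<in>?G. card (IL B j))"
    unfolding cover
  proof (rule card_UN_disjoint)
    show "finite ?G" by simp
    show "\<forall>B\<in>?G. finite (IL B j)" by (simp add: finite_IL)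
    show "\<forall>B\<in>?G. \<forall>B'\<in>?G. B \<noteq> B' \<longrightarrow> IL B j \<inter> IL B' j = {}"
      using IL_span_eq by blast
  qed
  also have "\<dots> = (\<Sum>B\<in>?G. \<Prod>i<j. CARD('a) ^ j - CARD('a) ^ i)"
    by (rule sum.cong) (auto simp: card_IL)
  finally show ?thesis using card_IL[OF W, of j] by simp
qed



lemma card_ge2: "CARD('a::{finite,field}) \<ge> 2"
proof -
  have "card {0::'a, 1} = 2" by simp
  moreover have "card {0::'a, 1} \<le> CARD('a)" by (rule card_mono) auto
  ultimately show ?thesis by simp
qed

lemma prod_shift_pow:
  fixes q :: real
  shows "(\<Prod>i<m. q ^ Suc a - q ^ Suc i) = q ^ m * (\<Prod>i<m. q ^ a - q ^ i)"
  by (induction m) (auto simp: algebra_simps)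

lemma aux_mult:
  fixes A B C X Y q :: real
  assumes "X * (q - 1) = C * Y"
  shows "A * (B * X) * (q - 1) = A * (C * (B * Y))"
proof -
  have "A * (B * X) * (q - 1) = A * B * (X * (q - 1))" by (simp only: mult_ac)
  also have "\<dots> = A * B * (C * Y)" by (simp only: assms)
  also have "\<dots> = A * (C * (B * Y))" by (simp only: mult_ac)
  finally show ?thesis .
qed

lemma prod_ident:
  fixes q :: real
  shows "(\<Prod>i<m. q ^ Suc m - q ^ i) * (q - 1) = (q ^ Suc m - 1) * (\<Prod>i<m. q ^ m - q ^ i)"
proof (induction m)
  case 0 then show ?case by simp
next
  case (Suc m)
  have a: "(\<Prod>i<Suc m. q ^ Suc (Suc m) - q ^ i) = (q ^ Suc (Suc m) - 1) * (q ^ m * (\<Prod>i<m. q ^ Suc m - q ^ i))"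
    by (subst prod.lessThan_Suc_shift) (simp add: prod_shift_pow del: power_Suc prod.lessThan_Suc)
  have b: "(\<Prod>i<Suc m. q ^ Suc m - q ^ i) = (q ^ Suc m - 1) * (q ^ m * (\<Prod>i<m. q ^ m - q ^ i))"
    by (subst prod.lessThan_Suc_shift) (simp add: prod_shift_pow del: power_Suc prod.lessThan_Suc)
  show ?case unfolding a b by (rule aux_mult[OF Suc.IH])
qed

lemma real_prod_diff:
  assumes "j \<le> a" "(q::nat) \<ge> 1"
  shows "real (\<Prod>i<j. q ^ a - q ^ i) = (\<Prod>i<j. real q ^ a - real q ^ i)"
proof -
  have "real (\<Prod>i<j. q ^ a - q ^ i) = (\<Prod>i<j. real (q ^ a - q ^ i))" by (simp add: of_nat_prod)
  also have "\<dots> = (\<Prod>i<j. real q ^ a - real q ^ i)"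
  proof (rule prod.cong)
    fix i assume "i \<in> {..<j}"
    then have "q ^ i \<le> q ^ a" using assms by (intro power_increasing) auto
    then show "real (q ^ a - q ^ i) = real q ^ a - real q ^ i" by (simp add: of_nat_diff)
  qed simp
  finally show ?thesis .
qed

lemma hyperplane_count:
  fixes A :: "('a::{finite,field}^'n) set"
  assumes "vec.subspace A" "vec.dim A = Suc m"
  shows "real (card {B. vec.subspace B \<and> vec.dim B = m \<and> B \<subseteq> A}) * (real CARD('a) - 1)
     = real CARD('a) ^ Suc m - 1"
proof -
  let ?q = "real CARD('a)"
  let ?c = "real (card {B. vec.subspace B \<and> vec.dim B = m \<and> B \<subseteq> A})"
  let ?P = "(\<Prod>i<m. ?q ^ m - ?q ^ i)"
  let ?X = "(\<Prod>i<m. ?q ^ Suc m - ?q ^ i)"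
  have q1: "CARD('a) \<ge> 1" using card_ge2[where 'a='a] by simp
  have q2: "?q \<ge> 2" using card_ge2[where 'a='a] by simp
  have g: "card {B. vec.subspace B \<and> vec.dim B = m \<and> B \<subseteq> A} * (\<Prod>i<m. CARD('a) ^ m - CARD('a) ^ i)
     = (\<Prod>i<m. CARD('a) ^ Suc m - CARD('a) ^ i)"
    using G_count[OF assms(1), of m] unfolding assms(2) .
  have "?c * real (\<Prod>i<m. CARD('a) ^ m - CARD('a) ^ i) = real (\<Prod>i<m. CARD('a) ^ Suc m - CARD('a) ^ i)"
    using arg_cong[OF g, of real] by (simp only: of_nat_mult)
  then have e1: "?c * ?P = ?X"
    by (simp only: real_prod_diff[of m m "CARD('a)", OF _ q1] real_prod_diff[of m "Suc m" "CARD('a)", OF _ q1] le_refl le_SucI)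
  have "(?c * (?q - 1)) * ?P = (?c * ?P) * (?q - 1)" by (simp only: mult_ac)
  also have "\<dots> = ?X * (?q - 1)" by (simp only: e1)
  also have "\<dots> = (?q ^ Suc m - 1) * ?P" by (rule prod_ident)
  finally have e2: "(?c * (?q - 1)) * ?P = (?q ^ Suc m - 1) * ?P" .
  have "?P > 0"
  proof (rule prod_pos)
    fix i assume "i \<in> {..<m}"
    then have "?q ^ i < ?q ^ m" using q2 by (intro power_strict_increasing) auto
    then show "?q ^ m - ?q ^ i > 0" by simp
  qed
  then have ne: "?P \<noteq> 0" by (rule less_imp_neq[symmetric])
  show ?thesis using mult_right_cancel[OF ne] e2 by (rule iffD1)
qed



lemma final_alg:
  fixes X s D L0 L1 N h q Q :: real
  assumes "s > 0" "D > 0" "L0 > 0" "L1 > 0" "h > 0" "q > 0" "Q > 0"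
    and "L1 * N = L0 * h" and "X \<le> s * N * h - (s * h)^2 / D"
  shows "X / (q * h * Q * s) \<le> N / (q * Q) * (1 - (s / L0) / (D / L1))"
proof -
  have pos: "q * h * Q * s > 0" using assms by simp
  have "X / (q * h * Q * s) \<le> (s * N * h - (s * h)^2 / D) / (q * h * Q * s)"
    using assms(9) pos by (simp add: divide_right_mono)
  also have "\<dots> = (N - s * h / D) / (q * Q)"
    using assms by (simp add: field_simps power2_eq_square)
  also have "\<dots> = N / (q * Q) * (1 - (s / L0) / (D / L1))"
  proof -
    have "N * (s * L1 / (L0 * D)) = s * h / D"
      using assms(3,4,2) assms(8) by (simp add: field_simps)
    then show ?thesis using assms by (simp add: field_simps)
  qed
  finally show ?thesis .
qed

lemma inter_hyper:
  fixes A A' B :: "('a::{finite,field}^'n) set"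
  assumes "A \<in> subspaces k" "A' \<in> subspaces k" "A \<noteq> A'" "B \<in> subspaces (k - 1)" "B \<subseteq> A" "B \<subseteq> A'"
    "1 \<le> k"
  shows "B = A \<inter> A'" "vec.dim (A \<inter> A') = k - 1"
proof -
  have sA: "vec.subspace A" "vec.dim A = k" using assms(1) by (auto simp: subspaces_def)
  have sA': "vec.subspace A'" "vec.dim A' = k" using assms(2) by (auto simp: subspaces_def)
  have sB: "vec.subspace B" "vec.dim B = k - 1" using assms(4) by (auto simp: subspaces_def)
  have sI: "vec.subspace (A \<inter> A')" using sA sA' by (simp add: vec.subspace_inter)
  have le: "vec.dim (A \<inter> A') \<le> k" using vec.dim_subset[of "A \<inter> A'" A] sA by auto
  have ne: "vec.dim (A \<inter> A') \<noteq> k"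
  proof
    assume h: "vec.dim (A \<inter> A') = k"
    have "A \<inter> A' = A" using vec.subspace_dim_equal[OF sI sA(1)] h sA by auto
    moreover have "A \<inter> A' = A'" using vec.subspace_dim_equal[OF sI sA'(1)] h sA' by auto
    ultimately show False using assms(3) by simp
  qed
  have ge: "k - 1 \<le> vec.dim (A \<inter> A')" using vec.dim_subset[of B "A \<inter> A'"] sB assms(5,6) by auto
  show d: "vec.dim (A \<inter> A') = k - 1" using le ne ge by linarith
  show "B = A \<inter> A'" using vec.subspace_dim_equal[OF sB(1) sI] assms(5,6) d sB by auto
qed

lemma psub_iff:
  fixes A B :: "('a::{finite,field}^'n) set"
  assumes "A \<in> subspaces k" "B \<in> subspaces (k - 1)" "1 \<le> k"
  shows "B \<subset> A \<longleftrightarrow> B \<subseteq> A"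
  using assms by (auto simp: subspaces_def)

lemma adj_iff:
  fixes A A' :: "('a::{finite,field}^'n) set"
  assumes "A \<in> subspaces k" "A' \<in> subspaces k" "1 \<le> k"
  shows "grassmann_adj k A A' \<longleftrightarrow> (A \<noteq> A' \<and> (\<exists>B\<in>subspaces (k - 1). B \<subset> A \<and> B \<subset> A'))"
proof
  assume h: "grassmann_adj k A A'"
  then have d: "vec.dim (A \<inter> A') = k - 1" by (simp add: grassmann_adj_def)
  have sA: "vec.subspace A" "vec.dim A = k" using assms(1) by (auto simp: subspaces_def)
  have sA': "vec.subspace A'" "vec.dim A' = k" using assms(2) by (auto simp: subspaces_def)
  have "A \<noteq> A'" using d sA assms(3) by auto
  moreover have "A \<inter> A' \<in> subspaces (k - 1)"
    using d sA sA' by (simp add: subspaces_def vec.subspace_inter)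
  moreover have "A \<inter> A' \<subset> A" "A \<inter> A' \<subset> A'" using d sA sA' assms(3) by auto
  ultimately show "A \<noteq> A' \<and> (\<exists>B\<in>subspaces (k - 1). B \<subset> A \<and> B \<subset> A')" by blast
next
  assume "A \<noteq> A' \<and> (\<exists>B\<in>subspaces (k - 1). B \<subset> A \<and> B \<subset> A')"
  then obtain B where "A \<noteq> A'" "B \<in> subspaces (k - 1)" "B \<subseteq> A" "B \<subseteq> A'" by blast
  then have "vec.dim (A \<inter> A') = k - 1" using inter_hyper(2)[OF assms(1,2)] assms(3) by blast
  then show "grassmann_adj k A A'" using assms by (simp add: grassmann_adj_def)
qed



theorem lemma4:
  fixes S :: "(('a::{finite,field})^'n) set set" and q :: real and n k :: nat
  assumes "q = real CARD('a)" and "n = CARD('n)"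
    and "1 \<le> k" and "k \<le> n - 1"
    and "S \<subseteq> subspaces k" and "S \<noteq> {}"
  shows "Phi_grassmann k S
    \<le> qint q (real n - real k + 1) / (q * qint q (real n - real k))
        * (1 - mu k S / mu (k - 1) (shadow k S))"
proof -
  note qdef = assms(1) and ndef = assms(2) and k1 = assms(3) and kn = assms(4)
    and SL = assms(5) and Sne = assms(6)
  let ?L0 = "subspaces k :: ('a^'n) set set"
  let ?L1 = "subspaces (k - 1) :: ('a^'n) set set"
  let ?R = "\<lambda>B A. B \<subset> (A::('a^'n) set)"
  define N where "N = qint q (real n - real k + 1)"
  define h where "h = qint q (real k)"
  define Q where "Q = qint q (real n - real k)"
  have q2: "q \<ge> 2" using card_ge2[where 'a='a] qdef by simp
  have q0: "q > 0" using q2 by simp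
  have kn': "k < n" using k1 kn by linarith
  have e1: "real n - real k + 1 = real (n - k + 1)" using kn' by (simp add: of_nat_diff)
  have e2: "real n - real k = real (n - k)" using kn' by (simp add: of_nat_diff)
  have Nval: "N = (q ^ (n - k + 1) - 1) / (q - 1)"
    unfolding N_def qint_def e1 by (simp only: powr_realpow[OF q0])
  have hval: "h = (q ^ k - 1) / (q - 1)"
    unfolding h_def qint_def using q0 by (simp add: powr_realpow)
  have Qval: "Q = (q ^ (n - k) - 1) / (q - 1)"
    unfolding Q_def qint_def e2 using q0 by (simp add: powr_realpow)
  have powgt: "q ^ m > 1" if "m \<ge> 1" for m :: nat
  proof -
    have "q ^ 1 \<le> q ^ m" using that q2 by (intro power_increasing) auto
    then show ?thesis using q2 by simp
  qed
  have hpos: "h > 0" unfolding hval using powgt[OF k1] q2 by simp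
  have Qpos: "Q > 0" unfolding Qval using powgt[of "n - k"] kn' q2 by simp
  have finL0: "finite ?L0" by (rule finite_subset[of _ UNIV]) simp_all
  have finL1: "finite ?L1" by (rule finite_subset[of _ UNIV]) simp_all
  have up: "real (card {A\<in>?L0. ?R B A}) = N" if B: "B \<in> ?L1" for B
  proof -
    have sB: "vec.subspace B" "vec.dim B = k - 1" using B by (auto simp: subspaces_def)
    have set_eq: "{A\<in>?L0. ?R B A} = {A. vec.subspace A \<and> vec.dim A = Suc (k - 1) \<and> B \<subseteq> A}"
      using psub_iff[OF _ B k1] k1 by (auto simp: subspaces_def)
    let ?c = "card {A. vec.subspace A \<and> vec.dim A = Suc (k - 1) \<and> B \<subseteq> A}"
    have u: "?c * (CARD('a) ^ Suc (k - 1) - CARD('a) ^ (k - 1)) = CARD('a) ^ CARD('n) - CARD('a) ^ (k - 1)"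
      by (rule up_count[OF sB])
    have c1: "CARD('a) ^ (k - 1) \<le> CARD('a) ^ Suc (k - 1)"
      using card_ge2[where 'a='a] by (intro power_increasing) auto
    have c2: "CARD('a) ^ (k - 1) \<le> CARD('a) ^ CARD('n)"
      using card_ge2[where 'a='a] kn' ndef by (intro power_increasing) auto
    have a: "real ?c * (q ^ Suc (k - 1) - q ^ (k - 1)) = q ^ n - q ^ (k - 1)"
      using arg_cong[OF u, of real] c1 c2 qdef ndef by (simp add: of_nat_diff)
    have b: "q ^ Suc (k - 1) - q ^ (k - 1) = q ^ (k - 1) * (q - 1)" by (simp add: algebra_simps)
    have c: "q ^ n - q ^ (k - 1) = q ^ (k - 1) * (q ^ (n - k + 1) - 1)"
    proof -
      have "n = (k - 1) + (n - k + 1)" using kn' k1 by simp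
      then have "q ^ n = q ^ (k - 1) * q ^ (n - k + 1)" by (metis power_add)
      then show ?thesis by (simp add: algebra_simps)
    qed
    have "q ^ (k - 1) * (real ?c * (q - 1)) = real ?c * (q ^ (k - 1) * (q - 1))" by (simp only: mult_ac)
    also have "\<dots> = q ^ (k - 1) * (q ^ (n - k + 1) - 1)" using a unfolding b c .
    finally have F: "q ^ (k - 1) * (real ?c * (q - 1)) = q ^ (k - 1) * (q ^ (n - k + 1) - 1)" .
    have nz: "q ^ (k - 1) \<noteq> 0" using q0 by simp
    have "real ?c * (q - 1) = q ^ (n - k + 1) - 1" using mult_left_cancel[OF nz] F by (rule iffD1)
    then have "real ?c = N" unfolding Nval using q2 by (simp add: field_simps)
    then show ?thesis using set_eq by simp
  qed
  have down: "real (card {B\<in>?L1. ?R B A}) = h" if A: "A \<in> ?L0" for A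
  proof -
    have sA: "vec.subspace A" "vec.dim A = Suc (k - 1)" using A k1 by (auto simp: subspaces_def)
    have set_eq: "{B\<in>?L1. ?R B A} = {B. vec.subspace B \<and> vec.dim B = k - 1 \<and> B \<subseteq> A}"
      using psub_iff[OF A _ k1] by (auto simp: subspaces_def)
    have "real (card {B. vec.subspace B \<and> vec.dim B = k - 1 \<and> B \<subseteq> A}) * (q - 1) = q ^ Suc (k - 1) - 1"
      using hyperplane_count[OF sA] qdef by simp
    then have "real (card {B. vec.subspace B \<and> vec.dim B = k - 1 \<and> B \<subseteq> A}) = h"
      unfolding hval using q2 k1 by (simp add: field_simps)
    then show ?thesis using set_eq by simp
  qed
  have adj: "grassmann_adj k A A' \<longleftrightarrow> (A \<noteq> A' \<and> (\<exists>B\<in>?L1. ?R B A \<and> ?R B A'))"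
    if "A \<in> ?L0" "A' \<in> ?L0" for A A'
    using adj_iff[OF that k1] .
  have uniq: "B = B'" if "A \<in> ?L0" "A' \<in> ?L0" "A \<noteq> A'" "B \<in> ?L1" "B' \<in> ?L1"
     "?R B A" "?R B A'" "?R B' A" "?R B' A'" for A A' B B'
    using inter_hyper(1)[OF that(1,2,3,4) _ _ k1] inter_hyper(1)[OF that(1,2,3,5) _ _ k1] that(6-9) by blast
  define X where "X = real (card {(x,y). x\<in>S \<and> y\<in>?L0-S \<and> grassmann_adj k x y})"
  define Sh where "Sh = {B\<in>?L1. \<exists>A\<in>S. ?R B A}"
  have bound: "X \<le> real (card S) * N * h - (real (card S) * h)^2 / card Sh"
    unfolding X_def Sh_def
    by (rule abstract_bound[OF finL0 finL1 SL Sne up down hpos adj uniq])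
  have flag: "(\<Sum>B\<in>?L1. card {A\<in>?L0. ?R B A}) = (\<Sum>A\<in>?L0. card {B\<in>?L1. ?R B A})"
    by (rule flag_count[OF finL0 finL1])
  have "real (card ?L1) * N = real (card ?L0) * h"
  proof -
    have "real (card ?L1) * N = (\<Sum>B\<in>?L1. real (card {A\<in>?L0. ?R B A}))" using up by simp
    also have "\<dots> = (\<Sum>A\<in>?L0. real (card {B\<in>?L1. ?R B A}))"
      using arg_cong[OF flag, of real] by simp
    also have "\<dots> = real (card ?L0) * h" using down by simp
    finally show ?thesis .
  qed
  note flagr = this
  have finS: "finite S" using finL0 SL finite_subset by blast
  have spos: "real (card S) > 0" using finS Sne by (simp add: card_gt_0_iff)
  obtain A0 where A0: "A0 \<in> S" using Sne by blast
  have "real (card {B\<in>?L1. ?R B A0}) > 0" using down[of A0] A0 SL hpos by auto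
  then have "{B\<in>?L1. ?R B A0} \<noteq> {}" by (intro notI) (simp only: card.empty of_nat_0 less_irrefl)
  then obtain B0 where B0: "B0 \<in> ?L1" "?R B0 A0" by blast
  have finSh: "finite Sh" using finL1 by (simp add: Sh_def)
  have "B0 \<in> Sh" using B0 A0 by (auto simp: Sh_def)
  then have Dpos: "real (card Sh) > 0" using finSh by (auto simp: card_gt_0_iff)
  have L0pos: "real (card ?L0) > 0" using finL0 SL Sne by (auto simp: card_gt_0_iff)
  have L1pos: "real (card ?L1) > 0" using finL1 B0 by (auto simp: card_gt_0_iff)
  have phi: "Phi_grassmann k S = X / (q * h * Q * real (card S))"
    unfolding Phi_grassmann_def edge_expansion_def Let_def X_def h_def Q_def qdef ndef
    by (simp add: mult.assoc)
  have mus: "mu k S / mu (k - 1) (shadow k S) = (real (card S) / real (card ?L0)) / (real (card Sh) / real (card ?L1))"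
    unfolding mu_def shadow_def Sh_def by simp
  show ?thesis
    unfolding phi mus N_def[symmetric] Q_def[symmetric]
    by (rule final_alg[OF spos Dpos L0pos L1pos hpos q0 Qpos flagr bound])
qed

end
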